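(* Let $k\ge1$ and let $B\in\mathfrak{gl}_n(\mathbb C)$ satisfy $B[B,B^*]=-B$, $B^k\neq0$, $B^{k+1}=0$. If $B'=hBh^{-1}$ for some $h\in\mathrm{GL}_n(\mathbb C)$ and $B'$ also satisfies $B'[B',B'^*]=-B'$, then $B'=UBU^{-1}$ for some $U\in\mathrm U(n)$.
   Context: $B^*$ is the conjugate transpose, $[X,Y]=XY-YX$. *)

theory Defs
  imports "HOL-Analysis.Analysis"
begin

text \<open>Square complex matrices of size n are modelled as complex ^'n ^'n (n = CARD('n)).
  Note: * on this type is componentwise, so matrix product is ** and matrix power is
  defined below.\<close>

primrec matpow :: "'a::semiring_1 ^'n ^'n \<Rightarrow> nat \<Rightarrow> 'a ^'n ^'n" where
  "matpow A 0 = mat 1"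
| "matpow A (Suc k) = A ** matpow A k"

definition conj_transpose :: "complex ^'n ^'m \<Rightarrow> complex ^'m ^'n" where
  "conj_transpose A = (\<chi> i j. cnj (A $ j $ i))"

definition commutator :: "'a::ring_1 ^'n ^'n \<Rightarrow> 'a ^'n ^'n \<Rightarrow> 'a ^'n ^'n" where
  "commutator X Y = X ** Y - Y ** X"

definition unitary_mat :: "complex ^'n ^'n \<Rightarrow> bool" where
  "unitary_mat U \<longleftrightarrow> U ** conj_transpose U = mat 1 \<and> conj_transpose U ** U = mat 1"

end

theory Submission
  imports Defs
begin


definition cinner :: "complex^'n \<Rightarrow> complex^'n \<Rightarrow> complex" where
  "cinner x y = (\<Sum>i\<in>UNIV. x$i * cnj (y$i))"

lemma cinner_adj: "cinner (A *v x) y = cinner x (conj_transpose A *v y)"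
proof -
  have "cinner (A *v x) y = (\<Sum>i\<in>UNIV. \<Sum>j\<in>UNIV. A$i$j * x$j * cnj (y$i))"
    unfolding cinner_def matrix_vector_mult_def by (simp add: sum_distrib_right)
  also have "\<dots> = (\<Sum>j\<in>UNIV. \<Sum>i\<in>UNIV. A$i$j * x$j * cnj (y$i))"
    by (rule sum.swap)
  also have "\<dots> = cinner x (conj_transpose A *v y)"
    unfolding cinner_def matrix_vector_mult_def conj_transpose_def
    by (simp add: sum_distrib_left mult_ac)
  finally show ?thesis .
qed

lemma cinner_add_left: "cinner (x + y) z = cinner x z + cinner y z"
  by (simp add: cinner_def algebra_simps sum.distrib)
lemma cinner_add_right: "cinner z (x + y) = cinner z x + cinner z y"
  by (simp add: cinner_def algebra_simps sum.distrib)
lemma cinner_diff_left: "cinner (x - y) z = cinner x z - cinner y z"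
  by (simp add: cinner_def algebra_simps sum_subtractf)
lemma cinner_scale_left: "cinner (c *s x) z = c * cinner x z"
  by (simp add: cinner_def algebra_simps sum_distrib_left)
lemma cinner_scale_right: "cinner z (c *s x) = cnj c * cinner z x"
  by (simp add: cinner_def algebra_simps sum_distrib_left)
lemma cinner_zero_left[simp]: "cinner 0 z = 0"
  by (simp add: cinner_def)
lemma cinner_zero_right[simp]: "cinner z 0 = 0"
  by (simp add: cinner_def)
lemma cinner_sum_left: "cinner (\<Sum>i\<in>S. f i) z = (\<Sum>i\<in>S. cinner (f i) z)"
  by (induction S rule: infinite_finite_induct) (auto simp: cinner_add_left)
lemma cinner_cnj: "cnj (cinner x y) = cinner y x"
  by (simp add: cinner_def mult.commute)
lemma cinner_self_real: "cnj (cinner x x) = cinner x x"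
  by (simp add: cinner_cnj)

lemma cinner_self: "cinner x x = of_real (\<Sum>i\<in>UNIV. (norm (x$i))^2)"
proof -
  have e: "\<And>z::complex. z * cnj z = of_real ((norm z)^2)" using complex_norm_square by metis
  show ?thesis by (simp only: cinner_def e of_real_sum)
qed

lemma cinner_self_eq_0: "cinner x x = 0 \<longleftrightarrow> x = 0"
proof
  assume "cinner x x = 0"
  then have "(\<Sum>i\<in>UNIV. (norm (x$i))^2) = 0" unfolding cinner_self of_real_eq_0_iff .
  then have "\<forall>i\<in>UNIV. (norm (x$i))^2 = 0"
    by (subst (asm) sum_nonneg_eq_0_iff) auto
  then show "x = 0" by (simp add: vec_eq_iff)
qed simp

lemma ct_mult: "conj_transpose (A ** B) = conj_transpose B ** conj_transpose A"
  by (simp add: conj_transpose_def matrix_matrix_mult_def vec_eq_iff mult.commute)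
lemma ct_ct[simp]: "conj_transpose (conj_transpose A) = A"
  by (simp add: conj_transpose_def vec_eq_iff)
lemma ct_diff: "conj_transpose (A - B) = conj_transpose A - conj_transpose B"
  by (simp add: conj_transpose_def vec_eq_iff)
lemma ct_uminus: "conj_transpose (- A) = - conj_transpose A"
  by (simp add: conj_transpose_def vec_eq_iff)

lemma matpow_Suc_vec: "matpow A (Suc t) *v x = A *v (matpow A t *v x)"
  by (simp add: matrix_vector_mul_assoc)

lemma matpow_Suc_right: "matpow A (Suc t) = matpow A t ** A"
  by (induction t) (simp_all add: matrix_mul_assoc)

lemma matpow_Suc_right_vec: "matpow A (Suc t) *v x = matpow A t *v (A *v x)"
  by (metis matpow_Suc_right matrix_vector_mul_assoc)

lemma matpow_add_vec: "matpow A (i + j) *v x = matpow A i *v (matpow A j *v x)"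
  by (induction i) (simp_all add: matrix_vector_mul_assoc[symmetric])

lemma cinner_adj_pow:
  "cinner (matpow A j *v x) y = cinner x (matpow (conj_transpose A) j *v y)"
proof (induction j arbitrary: y)
  case 0 then show ?case by simp
next
  case (Suc j)
  have "cinner (matpow A (Suc j) *v x) y = cinner (A *v (matpow A j *v x)) y"
    by (simp only: matpow_Suc_vec)
  also have "\<dots> = cinner (matpow A j *v x) (conj_transpose A *v y)" by (rule cinner_adj)
  also have "\<dots> = cinner x (matpow (conj_transpose A) j *v (conj_transpose A *v y))" by (rule Suc)
  also have "\<dots> = cinner x (matpow (conj_transpose A) (Suc j) *v y)"
    by (simp only: matpow_Suc_right_vec)
  finally show ?case .
qed



definition osys :: "'i set \<Rightarrow> ('i \<Rightarrow> complex^'n) \<Rightarrow> bool" where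
  "osys I b \<longleftrightarrow> finite I \<and> (\<forall>i\<in>I. b i \<noteq> 0) \<and>
     (\<forall>i\<in>I. \<forall>j\<in>I. i \<noteq> j \<longrightarrow> cinner (b i) (b j) = 0) \<and>
     (\<forall>x. (\<forall>i\<in>I. cinner x (b i) = 0) \<longrightarrow> x = 0)"

lemma cinner_sum_orth:
  assumes "finite I" "j \<in> I" "\<forall>i\<in>I. i \<noteq> j \<longrightarrow> cinner (b i) (b j) = 0"
  shows "cinner (\<Sum>i\<in>I. f i *s b i) (b j) = f j * cinner (b j) (b j)"
proof -
  have "cinner (\<Sum>i\<in>I. f i *s b i) (b j) = (\<Sum>i\<in>I. f i * cinner (b i) (b j))"
    by (simp add: cinner_sum_left cinner_scale_left)
  also have "\<dots> = f j * cinner (b j) (b j)"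
    using assms by (subst sum.remove[of I j]) (auto intro!: sum.neutral)
  finally show ?thesis .
qed

lemma osys_nz: "osys I b \<Longrightarrow> i \<in> I \<Longrightarrow> cinner (b i) (b i) \<noteq> 0"
  by (simp add: osys_def cinner_self_eq_0)

lemma osys_expand:
  assumes "osys I b"
  shows "x = (\<Sum>i\<in>I. (cinner x (b i) / cinner (b i) (b i)) *s b i)"
proof -
  let ?y = "x - (\<Sum>i\<in>I. (cinner x (b i) / cinner (b i) (b i)) *s b i)"
  have "\<forall>j\<in>I. cinner ?y (b j) = 0"
  proof
    fix j assume j: "j \<in> I"
    have nz: "cinner (b j) (b j) \<noteq> 0" using assms j by (rule osys_nz)
    have "cinner (\<Sum>i\<in>I. (cinner x (b i) / cinner (b i) (b i)) *s b i) (b j)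
        = (cinner x (b j) / cinner (b j) (b j)) * cinner (b j) (b j)"
      using assms j by (intro cinner_sum_orth) (auto simp: osys_def)
    then show "cinner ?y (b j) = 0" using nz by (simp add: cinner_diff_left)
  qed
  then have "?y = 0" using assms unfolding osys_def by blast
  then show ?thesis by simp
qed

lemma mat_sum_vec: "(\<Sum>i\<in>S. M i) *v x = (\<Sum>i\<in>S. M i *v x)"
  by (induction S rule: infinite_finite_induct) (auto simp: matrix_vector_mult_add_rdistrib)

lemma vec_mat_sum: "(M::'a::field^'n^'m) *v (\<Sum>i\<in>S. f i) = (\<Sum>i\<in>S. M *v f i)"
  by (induction S rule: infinite_finite_induct) (auto simp: matrix_vector_right_distrib)

lemma osys_mat_eq:
  assumes "osys I b" "\<forall>i\<in>I. M1 *v b i = M2 *v b i"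
  shows "M1 = M2"
  unfolding matrix_eq
proof
  fix x
  have "M1 *v x = M1 *v (\<Sum>i\<in>I. (cinner x (b i) / cinner (b i) (b i)) *s b i)"
    using osys_expand[OF assms(1), of x] by simp
  also have "\<dots> = (\<Sum>i\<in>I. (cinner x (b i) / cinner (b i) (b i)) *s (M1 *v b i))"
    by (simp add: vec_mat_sum vector_scalar_commute)
  also have "\<dots> = (\<Sum>i\<in>I. (cinner x (b i) / cinner (b i) (b i)) *s (M2 *v b i))"
    using assms(2) by simp
  also have "\<dots> = M2 *v (\<Sum>i\<in>I. (cinner x (b i) / cinner (b i) (b i)) *s b i)"
    by (simp add: vec_mat_sum vector_scalar_commute)
  also have "\<dots> = M2 *v x"
    using osys_expand[OF assms(1), of x] by simp
  finally show "M1 *v x = M2 *v x" .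
qed

definition outer :: "complex \<Rightarrow> complex^'n \<Rightarrow> complex^'n \<Rightarrow> complex^'n^'n" where
  "outer c x y = (\<chi> r s. c * x$r * cnj (y$s))"

lemma outer_vec: "outer c x y *v z = (c * cinner z y) *s x"
  by (simp add: matrix_vector_mult_def outer_def cinner_def vec_eq_iff sum_distrib_left
      sum_distrib_right mult_ac)

lemma ct_outer: "conj_transpose (outer c x y) = outer (cnj c) y x"
  by (simp add: conj_transpose_def outer_def vec_eq_iff mult_ac)

lemma ct_add: "conj_transpose (A + B) = conj_transpose A + conj_transpose B"
  by (simp add: conj_transpose_def vec_eq_iff)

lemma ct_zero[simp]: "conj_transpose 0 = 0"
  by (simp add: conj_transpose_def vec_eq_iff)

lemma ct_sum: "conj_transpose (\<Sum>i\<in>S. M i) = (\<Sum>i\<in>S. conj_transpose (M i))"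
  by (induction S rule: infinite_finite_induct) (auto simp: ct_add)

lemma ct_mat1[simp]: "conj_transpose (mat 1) = mat 1"
  by (simp add: conj_transpose_def mat_def vec_eq_iff)

lemma osys_unitary:
  assumes ob: "osys I b" and ob': "osys I b'"
    and eqn: "\<forall>i\<in>I. cinner (b' i) (b' i) = cinner (b i) (b i)"
  defines "U \<equiv> \<Sum>i\<in>I. outer (1 / cinner (b i) (b i)) (b' i) (b i)"
  shows "unitary_mat U" "\<forall>i\<in>I. U *v b i = b' i"
proof -
  have fin: "finite I" using ob by (simp add: osys_def)
  have Uv: "U *v z = (\<Sum>i\<in>I. (cinner z (b i) / cinner (b i) (b i)) *s b' i)" for z
    unfolding U_def mat_sum_vec outer_vec by simp
  have "conj_transpose U = (\<Sum>i\<in>I. outer (1 / cinner (b' i) (b' i)) (b i) (b' i))"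
    unfolding U_def ct_sum ct_outer using eqn by (intro sum.cong) (auto simp: cinner_self_real)
  then have Utv: "conj_transpose U *v z = (\<Sum>i\<in>I. (cinner z (b' i) / cinner (b' i) (b' i)) *s b i)" for z
    by (simp only: mat_sum_vec outer_vec) simp
  have o1: "\<forall>i\<in>I. i \<noteq> j \<longrightarrow> cinner (b i) (b j) = 0" if "j \<in> I" for j
    using ob that by (auto simp: osys_def)
  have o2: "\<forall>i\<in>I. i \<noteq> j \<longrightarrow> cinner (b' i) (b' j) = 0" if "j \<in> I" for j
    using ob' that by (auto simp: osys_def)
  have A: "conj_transpose U *v (U *v z) = z" for z
  proof -
    have "conj_transpose U *v (U *v z) = (\<Sum>j\<in>I. (cinner z (b j) / cinner (b j) (b j)) *s b j)"
      unfolding Utv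
    proof (intro sum.cong refl)
      fix j assume j: "j \<in> I"
      have "cinner (U *v z) (b' j) = (cinner z (b j) / cinner (b j) (b j)) * cinner (b' j) (b' j)"
        unfolding Uv by (rule cinner_sum_orth[OF fin j o2[OF j]])
      then show "(cinner (U *v z) (b' j) / cinner (b' j) (b' j)) *s b j =
          (cinner z (b j) / cinner (b j) (b j)) *s b j"
        using osys_nz[OF ob' j] by simp
    qed
    also have "\<dots> = z" using osys_expand[OF ob] by simp
    finally show ?thesis .
  qed
  have B: "U *v (conj_transpose U *v z) = z" for z
  proof -
    have "U *v (conj_transpose U *v z) = (\<Sum>j\<in>I. (cinner z (b' j) / cinner (b' j) (b' j)) *s b' j)"
      unfolding Uv
    proof (intro sum.cong refl)
      fix j assume j: "j \<in> I"
      have "cinner (conj_transpose U *v z) (b j) = (cinner z (b' j) / cinner (b' j) (b' j)) * cinner (b j) (b j)"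
        unfolding Utv by (rule cinner_sum_orth[OF fin j o1[OF j]])
      then show "(cinner (conj_transpose U *v z) (b j) / cinner (b j) (b j)) *s b' j =
          (cinner z (b' j) / cinner (b' j) (b' j)) *s b' j"
        using osys_nz[OF ob j] eqn j by simp
    qed
    also have "\<dots> = z" using osys_expand[OF ob'] by simp
    finally show ?thesis .
  qed
  show "unitary_mat U"
    unfolding unitary_mat_def matrix_eq
    using A B by (simp add: matrix_vector_mul_assoc[symmetric])
  show "\<forall>i\<in>I. U *v b i = b' i"
  proof
    fix j assume j: "j \<in> I"
    have "U *v b j = (\<Sum>i\<in>I. (cinner (b j) (b i) / cinner (b i) (b i)) *s b' i)" by (rule Uv)
    also have "\<dots> = (cinner (b j) (b j) / cinner (b j) (b j)) *s b' j"
      using fin j ob by (subst sum.remove[of I j]) (auto intro!: sum.neutral simp: osys_def)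
    also have "\<dots> = b' j" using osys_nz[OF ob j] by simp
    finally show "U *v b j = b' j" .
  qed
qed



declare matpow.simps(2)[simp del]

lemma matpow_1[simp]: "matpow A (Suc 0) = A"
  by (simp add: matpow.simps(2))

lemma uminus_mat_vec: "(- A) *v x = - (A *v (x::'a::ring_1^'n))"
  by (simp add: vec_eq_iff matrix_vector_mult_def sum_negf)

lemma last_step: "\<not> P 0 \<Longrightarrow> P N \<Longrightarrow> \<exists>j<N. \<not> P j \<and> P (Suc j)"
proof (induction N)
  case 0 then show ?case by simp
next
  case (Suc N)
  show ?case
  proof (cases "P N")
    case True
    with Suc obtain j where "j < N" "\<not> P j" "P (Suc j)" by blast
    then show ?thesis by (intro exI[of _ j]) auto
  next
    case False
    then show ?thesis using Suc by (intro exI[of _ N]) auto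
  qed
qed

lemma orth_indep:
  assumes "finite S" "\<forall>x\<in>S. x \<noteq> 0" "\<forall>x\<in>S. \<forall>y\<in>S. x \<noteq> y \<longrightarrow> cinner x y = 0"
  shows "vec.independent S"
proof
  assume "vec.dependent S"
  then obtain u v where v: "v \<in> S" "u v \<noteq> 0" and s: "(\<Sum>x\<in>S. u x *s x) = 0"
    using vec.dependent_finite[OF assms(1)] by blast
  have "cinner (\<Sum>x\<in>S. u x *s id x) (id v) = u v * cinner (id v) (id v)"
    using assms v by (intro cinner_sum_orth) auto
  then have "u v * cinner v v = 0" using s by simp
  then show False using v assms(2) by (simp add: cinner_self_eq_0)
qed

definition pcc :: "nat \<Rightarrow> nat \<Rightarrow> complex" where
  "pcc m a = (\<Prod>t<a. (of_nat m - of_nat t))"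

lemma pcc_Suc: "pcc m (Suc a) = pcc m a * (of_nat m - of_nat a)"
  by (simp add: pcc_def)

lemma pcc_nz: "a \<le> m \<Longrightarrow> pcc m a \<noteq> 0"
  by (simp add: pcc_def)

lemma pcc_top: "pcc m (Suc m) = 0"
  by (simp add: pcc_def)

locale ncond =
  fixes B :: "complex^'n^'n" and k :: nat
  assumes comm: "B ** commutator B (conj_transpose B) = - B"
    and nil: "matpow B (Suc k) = 0"
begin

abbreviation "Bs \<equiv> conj_transpose B"
abbreviation "C \<equiv> B ** Bs"

lemma C_vec: "C *v x = B *v (Bs *v x)"
  by (simp add: matrix_vector_mul_assoc)

lemma comm_vec: "B *v (B *v (Bs *v x)) - B *v (Bs *v (B *v x)) = - (B *v x)"
proof -
  have "(B ** (B ** Bs - Bs ** B)) *v x = (- B) *v x" using comm by (simp add: commutator_def)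
  then show ?thesis
    by (simp add: matrix_vector_mul_assoc[symmetric] matrix_vector_mult_diff_rdistrib
        matrix_vector_mult_diff_distrib uminus_mat_vec)
qed

lemma comm'_vec: "B *v (Bs *v (Bs *v x)) - Bs *v (B *v (Bs *v x)) = - (Bs *v x)"
proof -
  have "conj_transpose (B ** (B ** Bs - Bs ** B)) = conj_transpose (- B)" using comm
    by (simp add: commutator_def)
  then have "(B ** Bs - Bs ** B) ** Bs = - Bs"
    by (simp add: ct_mult ct_diff ct_uminus)
  then have "((B ** Bs - Bs ** B) ** Bs) *v x = (- Bs) *v x" by simp
  then show ?thesis
    by (simp add: matrix_vector_mul_assoc[symmetric] matrix_vector_mult_diff_rdistrib
        matrix_vector_mult_diff_distrib uminus_mat_vec)
qed

lemma CB: "C *v (B *v x) = B *v (C *v x) + B *v x"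
  using comm_vec[of x] by (simp add: C_vec algebra_simps)

lemma BC: "B *v (C *v x) = C *v (B *v x) - B *v x"
  using CB[of x] by (simp add: algebra_simps)

lemma CBs: "C *v (Bs *v x) = Bs *v (C *v x) - Bs *v x"
  using comm'_vec[of x] by (simp add: C_vec algebra_simps)

lemma CBpow: "C *v (matpow B t *v u) = matpow B t *v (C *v u) + of_nat t *s (matpow B t *v u)"
proof (induction t)
  case 0 then show ?case by simp
next
  case (Suc t)
  have "C *v (matpow B (Suc t) *v u) = C *v (B *v (matpow B t *v u))" by (simp only: matpow_Suc_vec)
  also have "\<dots> = B *v (C *v (matpow B t *v u)) + B *v (matpow B t *v u)" by (rule CB)
  also have "\<dots> = B *v (matpow B t *v (C *v u)) + of_nat t *s (B *v (matpow B t *v u)) + B *v (matpow B t *v u)"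
    by (simp add: Suc matrix_vector_right_distrib vector_scalar_commute)
  also have "\<dots> = matpow B (Suc t) *v (C *v u) + of_nat (Suc t) *s (matpow B (Suc t) *v u)"
    by (simp only: matpow_Suc_vec) (simp add: vec_eq_iff algebra_simps)
  finally show ?case .
qed

lemma CBspow: "C *v (matpow Bs t *v u) = matpow Bs t *v (C *v u) - of_nat t *s (matpow Bs t *v u)"
proof (induction t)
  case 0 then show ?case by simp
next
  case (Suc t)
  have "C *v (matpow Bs (Suc t) *v u) = C *v (Bs *v (matpow Bs t *v u))" by (simp only: matpow_Suc_vec)
  also have "\<dots> = Bs *v (C *v (matpow Bs t *v u)) - Bs *v (matpow Bs t *v u)" by (rule CBs)
  also have "\<dots> = Bs *v (matpow Bs t *v (C *v u)) - of_nat t *s (Bs *v (matpow Bs t *v u)) - Bs *v (matpow Bs t *v u)"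
    by (simp add: Suc matrix_vector_mult_diff_distrib vector_scalar_commute)
  also have "\<dots> = matpow Bs (Suc t) *v (C *v u) - of_nat (Suc t) *s (matpow Bs (Suc t) *v u)"
    by (simp only: matpow_Suc_vec) (simp add: vec_eq_iff algebra_simps)
  finally show ?case .
qed

lemma eig_Bs:
  assumes "C *v u = \<mu> *s u"
  shows "C *v (matpow Bs a *v u) = (\<mu> - of_nat a) *s (matpow Bs a *v u)"
  using CBspow[of a u] assms by (simp add: vector_scalar_commute vec_eq_iff algebra_simps)

lemma B_step:
  assumes "C *v u = \<mu> *s u"
  shows "B *v (matpow Bs (Suc a) *v u) = (\<mu> - of_nat a) *s (matpow Bs a *v u)"
proof -
  have "B *v (matpow Bs (Suc a) *v u) = C *v (matpow Bs a *v u)"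
    by (simp only: matpow_Suc_vec C_vec)
  then show ?thesis using eig_Bs[OF assms] by simp
qed

lemma inner_formula:
  assumes v: "B *v v = 0" and w: "B *v w = 0" "C *v w = of_nat m *s w"
  shows "cinner (matpow Bs a *v v) (matpow Bs b *v w) = (if a = b then pcc m a * cinner v w else 0)"
proof (induction a arbitrary: b)
  case 0
  show ?case
  proof (cases b)
    case 0 then show ?thesis by (simp add: pcc_def)
  next
    case (Suc b')
    have "cinner (matpow Bs 0 *v v) (matpow Bs b *v w) = cinner (matpow B b *v v) w"
      using cinner_adj_pow[of B b v w] by simp
    also have "\<dots> = 0" using Suc v by (simp only: matpow_Suc_right_vec) simp
    finally show ?thesis using Suc by simp
  qed
next
  case (Suc a)
  show ?case
  proof (cases b)
    case 0
    have "cinner (matpow Bs (Suc a) *v v) (matpow Bs b *v w)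
        = cinner (Bs *v (matpow Bs a *v v)) w" using 0 by (simp only: matpow_Suc_vec) simp
    also have "\<dots> = 0" by (simp add: cinner_adj w)
    finally show ?thesis using 0 by simp
  next
    case (Suc b')
    have "cinner (matpow Bs (Suc a) *v v) (matpow Bs b *v w)
        = cinner (Bs *v (matpow Bs a *v v)) (matpow Bs (Suc b') *v w)"
      using Suc by (simp only: matpow_Suc_vec)
    also have "\<dots> = cinner (matpow Bs a *v v) (B *v (matpow Bs (Suc b') *v w))"
      by (simp add: cinner_adj)
    also have "\<dots> = cinner (matpow Bs a *v v) ((of_nat m - of_nat b') *s (matpow Bs b' *v w))"
      using B_step[OF w(2)] by simp
    also have "\<dots> = (of_nat m - of_nat b') * (if a = b' then pcc m a * cinner v w else 0)"
      by (simp only: cinner_scale_right Suc.IH) simp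
    also have "\<dots> = (if Suc a = b then pcc m (Suc a) * cinner v w else 0)"
      using Suc by (simp add: pcc_Suc)
    finally show ?thesis .
  qed
qed

lemma Bs_top:
  assumes "B *v v = 0" "C *v v = of_nat m *s v"
  shows "matpow Bs (Suc m) *v v = 0"
  using inner_formula[OF assms(1) assms, of "Suc m" "Suc m"]
  by (simp add: pcc_top cinner_self_eq_0)

lemma Bs_zero_above:
  assumes "B *v v = 0" "C *v v = of_nat m *s v" "m < a"
  shows "matpow Bs a *v v = 0"
proof -
  have "matpow Bs a *v v = matpow Bs (a - Suc m + Suc m) *v v" using assms(3) by simp
  also have "\<dots> = 0" by (simp only: matpow_add_vec Bs_top[OF assms(1,2)]) simp
  finally show ?thesis .
qed

lemma B_kill:
  assumes "B *v v = 0" "C *v v = \<mu> *s v"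
  shows "matpow B (Suc a) *v (matpow Bs a *v v) = 0"
proof (induction a)
  case 0 then show ?case using assms by simp
next
  case (Suc a)
  have "matpow B (Suc (Suc a)) *v (matpow Bs (Suc a) *v v)
       = matpow B (Suc a) *v (B *v (matpow Bs (Suc a) *v v))" by (simp only: matpow_Suc_right_vec)
  also have "\<dots> = (\<mu> - of_nat a) *s (matpow B (Suc a) *v (matpow Bs a *v v))"
    by (simp only: B_step[OF assms(2)] vector_scalar_commute)
  also have "\<dots> = 0" using Suc by simp
  finally show ?case .
qed

lemma B_kill_gen:
  assumes "B *v v = 0" "C *v v = \<mu> *s v" "a < j"
  shows "matpow B j *v (matpow Bs a *v v) = 0"
proof -
  have "matpow B j *v (matpow Bs a *v v) = matpow B (j - Suc a + Suc a) *v (matpow Bs a *v v)"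
    using assms(3) by simp
  also have "\<dots> = 0" by (simp only: matpow_add_vec B_kill[OF assms(1,2)]) simp
  finally show ?thesis .
qed

end



context ncond
begin

definition Kset where "Kset = {v. B *v v = 0 \<and> (\<exists>m\<le>k. C *v v = of_nat m *s v)}"

definition lev where "lev v = (SOME m. m \<le> k \<and> C *v v = of_nat m *s v)"

lemma lev: assumes "v \<in> Kset" shows "lev v \<le> k" "C *v v = of_nat (lev v) *s v" "B *v v = 0"
proof -
  have "\<exists>m. m \<le> k \<and> C *v v = of_nat m *s v" using assms by (auto simp: Kset_def)
  then have "lev v \<le> k \<and> C *v v = of_nat (lev v) *s v" unfolding lev_def by (rule someI_ex)
  then show "lev v \<le> k" "C *v v = of_nat (lev v) *s v" by auto
  show "B *v v = 0" using assms by (simp add: Kset_def)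
qed

definition ons where "ons F \<longleftrightarrow> finite F \<and> F \<subseteq> Kset \<and> (\<forall>v\<in>F. cinner v v = 1) \<and>
   (\<forall>v\<in>F. \<forall>w\<in>F. v \<noteq> w \<longrightarrow> cinner v w = 0)"

lemma ons_card: "ons F \<Longrightarrow> card F \<le> vec.dim (UNIV :: (complex^'n) set)"
proof -
  assume F: "ons F"
  have "vec.independent F"
  proof (rule orth_indep)
    show "finite F" using F by (simp add: ons_def)
    show "\<forall>x\<in>F. x \<noteq> 0"
    proof
      fix x assume "x \<in> F"
      then have "cinner x x = 1" using F by (simp add: ons_def)
      then show "x \<noteq> 0" by (metis cinner_zero_left zero_neq_one)
    qed
    show "\<forall>x\<in>F. \<forall>y\<in>F. x \<noteq> y \<longrightarrow> cinner x y = 0" using F by (simp add: ons_def)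
  qed
  then show ?thesis by (rule vec.independent_card_le_dim[OF subset_UNIV])
qed

lemma exists_max_ons: "\<exists>F. ons F \<and> (\<forall>G. ons G \<longrightarrow> card G \<le> card F)"
proof -
  define P where "P n \<longleftrightarrow> (\<exists>F. ons F \<and> card F = n)" for n
  have "ons {}" by (simp add: ons_def)
  then have P0: "P 0" unfolding P_def by (intro exI[of _ "{}"]) simp
  have bd: "\<forall>y. P y \<longrightarrow> y \<le> vec.dim (UNIV :: (complex^'n) set)"
    unfolding P_def using ons_card by blast
  obtain n where n: "P n" "\<forall>y. P y \<longrightarrow> y \<le> n"
    using Nat.ex_has_greatest_nat[OF P0 bd] by blast
  obtain F where F: "ons F" "card F = n" using n(1) unfolding P_def by blast
  have "\<forall>G. ons G \<longrightarrow> card G \<le> card F"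
  proof (intro allI impI)
    fix G assume "ons G"
    then have "P (card G)" unfolding P_def by blast
    then show "card G \<le> card F" using n(2) F(2) by blast
  qed
  then show ?thesis using F(1) by blast
qed

definition Xset where "Xset F = {x. \<forall>v\<in>F. \<forall>a. cinner x (matpow Bs a *v v) = 0}"

lemma X_B: "F \<subseteq> Kset \<Longrightarrow> x \<in> Xset F \<Longrightarrow> B *v x \<in> Xset F"
  unfolding Xset_def
  by (auto simp: cinner_adj matpow_Suc_vec[symmetric])

lemma X_Bs: assumes F: "F \<subseteq> Kset" and x: "x \<in> Xset F" shows "Bs *v x \<in> Xset F"
  unfolding Xset_def
proof (intro CollectI ballI allI)
  fix v a assume v: "v \<in> F"
  have vK: "v \<in> Kset" using F v by auto
  have "cinner (Bs *v x) (matpow Bs a *v v) = cinner x (B *v (matpow Bs a *v v))"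
    by (simp add: cinner_adj)
  also have "\<dots> = 0"
  proof (cases a)
    case 0 then show ?thesis using lev(3)[OF vK] by simp
  next
    case (Suc a')
    have "cinner x (B *v (matpow Bs a *v v)) = cinner x ((of_nat (lev v) - of_nat a') *s (matpow Bs a' *v v))"
      using Suc B_step[OF lev(2)[OF vK]] by simp
    also have "\<dots> = 0" using x v by (simp only: cinner_scale_right) (simp add: Xset_def)
    finally show ?thesis .
  qed
  finally show "cinner (Bs *v x) (matpow Bs a *v v) = 0" .
qed

lemma X_Bpow: "F \<subseteq> Kset \<Longrightarrow> x \<in> Xset F \<Longrightarrow> matpow B t *v x \<in> Xset F"
  by (induction t) (auto simp: matpow_Suc_vec X_B)

lemma X_Bspow: "F \<subseteq> Kset \<Longrightarrow> x \<in> Xset F \<Longrightarrow> matpow Bs t *v x \<in> Xset F"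
  by (induction t) (auto simp: matpow_Suc_vec X_Bs)

lemma X_C: "F \<subseteq> Kset \<Longrightarrow> x \<in> Xset F \<Longrightarrow> C *v x \<in> Xset F"
  by (simp add: C_vec X_B X_Bs)

lemma X_diff: "x \<in> Xset F \<Longrightarrow> y \<in> Xset F \<Longrightarrow> x - y \<in> Xset F"
  by (simp add: Xset_def cinner_diff_left)

lemma X_scale: "x \<in> Xset F \<Longrightarrow> c *s x \<in> Xset F"
  by (simp add: Xset_def cinner_scale_left)

lemma max_ons_complete:
  assumes F: "ons F" and mx: "\<forall>G. ons G \<longrightarrow> card G \<le> card F"
  shows "Xset F = {0}"
proof (rule ccontr)
  have FK: "F \<subseteq> Kset" using F by (simp add: ons_def)
  assume "Xset F \<noteq> {0}"
  moreover have "0 \<in> Xset F" by (simp add: Xset_def)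
  ultimately obtain x where x: "x \<in> Xset F" "x \<noteq> 0" by blast
  obtain j where j: "matpow B j *v x \<noteq> 0" "matpow B (Suc j) *v x = 0"
    using last_step[of "\<lambda>j. matpow B j *v x = 0" "Suc k"] x nil by auto
  define y where "y = matpow B j *v x"
  have y: "y \<in> Xset F" "y \<noteq> 0" "B *v y = 0"
    using j X_Bpow[OF FK x(1)] by (auto simp: y_def matpow_Suc_vec[symmetric])
  define zz where "zz t = matpow B t *v (matpow Bs t *v y)" for t
  have zzX: "zz t \<in> Xset F" for t
    unfolding zz_def using y(1) FK by (intro X_Bpow X_Bspow)
  have zz0: "zz 0 = y" by (simp add: zz_def)
  have zzk: "zz (Suc k) = 0" by (simp add: zz_def nil)
  have zzrec: "zz (Suc t) = C *v zz t - of_nat t *s zz t" for t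
  proof -
    have "zz (Suc t) = matpow B t *v (B *v (Bs *v (matpow Bs t *v y)))"
      unfolding zz_def matpow_Suc_right_vec[of B] matpow_Suc_vec[of Bs] ..
    also have "\<dots> = matpow B t *v (C *v (matpow Bs t *v y))" by (simp only: C_vec)
    also have "\<dots> = C *v zz t - of_nat t *s zz t"
      unfolding zz_def CBpow by simp
    finally show ?thesis .
  qed
  have Bzz: "B *v zz t = 0" for t
  proof (induction t)
    case 0 then show ?case using y by (simp add: zz0)
  next
    case (Suc t)
    show ?case
      by (simp add: zzrec matrix_vector_mult_diff_distrib vector_scalar_commute BC Suc)
  qed
  obtain j' where j': "j' < Suc k" "zz j' \<noteq> 0" "zz (Suc j') = 0"
    using last_step[of "\<lambda>t. zz t = 0" "Suc k"] zz0 zzk y(2) by auto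
  define z where "z = zz j'"
  have zC: "C *v z = of_nat j' *s z" using j'(3) zzrec[of j'] by (simp add: z_def)
  have "j' \<le> k" using j'(1) by simp
  then have zK: "z \<in> Kset" unfolding Kset_def using zC Bzz[of j'] unfolding z_def[symmetric] by blast
  have zperp: "\<forall>v\<in>F. cinner z v = 0"
  proof
    fix v assume "v \<in> F"
    then have "cinner z (matpow Bs 0 *v v) = 0" using zzX[of j'] unfolding Xset_def z_def by blast
    then show "cinner z v = 0" by simp
  qed
  have zn: "z \<noteq> 0" using j' by (simp add: z_def)
  define s where "s = (\<Sum>i\<in>UNIV. (norm (z$i))^2)"
  have zs: "cinner z z = of_real s" by (simp add: s_def cinner_self)
  have "s \<ge> 0" by (simp add: s_def sum_nonneg)
  moreover have "s \<noteq> 0" using zs zn cinner_self_eq_0[of z] by auto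
  ultimately have spos: "s > 0" by simp
  define c where "c = complex_of_real (1 / sqrt s)"
  define w where "w = c *s z"
  have e: "(complex_of_real (sqrt s))^2 = of_real s"
    using spos by (simp flip: of_real_power)
  have r: "(1/sqrt s) * (1/sqrt s) * s = 1" using spos by (simp add: field_simps real_sqrt_mult_self)
  have cc: "c * cnj c * of_real s = 1"
    unfolding c_def complex_cnj_complex_of_real of_real_mult[symmetric] r by simp
  have ww: "cinner w w = 1"
    unfolding w_def cinner_scale_left cinner_scale_right zs using cc by (simp add: mult_ac)
  have Bw: "B *v w = 0" using Bzz[of j'] by (simp add: w_def z_def vector_scalar_commute)
  have Cw: "C *v w = of_nat j' *s w"
    using zC by (simp add: w_def vector_scalar_commute vector_smult_assoc mult.commute)
  have wK: "w \<in> Kset" unfolding Kset_def using Bw Cw \<open>j' \<le> k\<close> by blast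
  have wperp: "\<forall>v\<in>F. cinner w v = 0 \<and> cinner v w = 0"
  proof
    fix v assume v: "v \<in> F"
    have z1: "cinner z v = 0" using zperp v by blast
    have z2: "cinner v z = 0" using cinner_cnj[of z v] z1 by simp
    show "cinner w v = 0 \<and> cinner v w = 0"
      unfolding w_def cinner_scale_left cinner_scale_right z1 z2 by simp
  qed
  have wF: "w \<notin> F" using wperp ww by auto
  have "ons (insert w F)"
    using F wK ww wperp unfolding ons_def by auto
  then have "card (insert w F) \<le> card F" using mx by blast
  moreover have "card (insert w F) = Suc (card F)"
    using F wF by (simp add: ons_def)
  ultimately show False by simp
qed

definition Iset where "Iset F = Sigma F (\<lambda>v. {..lev v})"
definition bvec where "bvec = (\<lambda>(v, a). matpow Bs a *v v)"

lemma struct_ex: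
  "\<exists>F. ons F \<and> osys (Iset F) bvec"
proof -
  obtain F where F: "ons F" and mx: "\<forall>G. ons G \<longrightarrow> card G \<le> card F"
    using exists_max_ons by blast
  have FK: "F \<subseteq> Kset" using F by (simp add: ons_def)
  have fin: "finite (Iset F)" using F by (auto simp: ons_def Iset_def)
  have inner: "cinner (bvec (v, a)) (bvec (w, b)) = (if a = b then pcc (lev w) a * cinner v w else 0)"
    if "v \<in> F" "w \<in> F" for v w a b
  proof -
    have vK: "v \<in> Kset" and wK: "w \<in> Kset" using that FK by auto
    show ?thesis unfolding bvec_def prod.case
      by (rule inner_formula[OF lev(3)[OF vK] lev(3)[OF wK] lev(2)[OF wK]])
  qed
  have nz: "bvec i \<noteq> 0" if "i \<in> Iset F" for i
  proof -
    obtain v a where i0: "i = (v, a)" by (cases i)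
    have i: "i = (v, a)" "v \<in> F" "a \<le> lev v" using that i0 by (auto simp: Iset_def)
    have "cinner (bvec i) (bvec i) = pcc (lev v) a"
      using inner[OF i(2) i(2), of a a] F i(2) by (simp add: i(1) ons_def)
    then show ?thesis using pcc_nz[OF i(3)] by auto
  qed
  have orth: "cinner (bvec i) (bvec j) = 0" if "i \<in> Iset F" "j \<in> Iset F" "i \<noteq> j" for i j
  proof -
    obtain v a where i0: "i = (v, a)" by (cases i)
    obtain w b where j0: "j = (w, b)" by (cases j)
    have i: "i = (v, a)" "v \<in> F" using that i0 by (auto simp: Iset_def)
    have j: "j = (w, b)" "w \<in> F" using that j0 by (auto simp: Iset_def)
    show ?thesis using inner[OF i(2) j(2), of a b] F i j that(3)
      by (auto simp: ons_def)
  qed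
  have compl: "x = 0" if x: "\<forall>i\<in>Iset F. cinner x (bvec i) = 0" for x
  proof -
    have "x \<in> Xset F"
      unfolding Xset_def
    proof (intro CollectI ballI allI)
      fix v a assume v: "v \<in> F"
      have vK: "v \<in> Kset" using v FK by auto
      show "cinner x (matpow Bs a *v v) = 0"
      proof (cases "a \<le> lev v")
        case True
        then show ?thesis using x v by (auto simp: Iset_def bvec_def)
      next
        case False
        then have "matpow Bs a *v v = 0" using Bs_zero_above[OF lev(3)[OF vK] lev(2)[OF vK]] by simp
        then show ?thesis by simp
      qed
    qed
    then show ?thesis using max_ons_complete[OF F mx] by auto
  qed
  have "osys (Iset F) bvec"
    unfolding osys_def using fin nz orth compl by blast
  then show ?thesis using F by blast
qed

lemma bvec_norm: "ons F \<Longrightarrow> v \<in> F \<Longrightarrow> cinner (bvec (v,a)) (bvec (v,a)) = pcc (lev v) a"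
  using inner_formula[of v v "lev v" a a] lev[of v] by (auto simp: ons_def bvec_def)

lemma ker_dim:
  assumes F: "ons F" and os: "osys (Iset F) bvec"
  shows "vec.dim {x. matpow B j *v x = 0} = card {i \<in> Iset F. snd i < j}"
proof -
  have FK: "F \<subseteq> Kset" using F by (simp add: ons_def)
  let ?I = "Iset F"
  let ?Ij = "{i \<in> Iset F. snd i < j}"
  let ?S = "bvec ` ?Ij"
  have fin: "finite ?I" using os by (simp add: osys_def)
  have inj: "inj_on bvec ?I"
  proof (rule inj_onI)
    fix i l assume il: "i \<in> ?I" "l \<in> ?I" "bvec i = bvec l"
    show "i = l"
    proof (rule ccontr)
      assume "i \<noteq> l"
      then have "cinner (bvec i) (bvec l) = 0" using os il unfolding osys_def by blast
      then have "cinner (bvec l) (bvec l) = 0" using il(3) by metis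
      then show False using osys_nz[OF os il(2)] by simp
    qed
  qed
  have indep: "vec.independent ?S"
  proof (rule orth_indep)
    show "finite ?S" using fin by simp
    show "\<forall>x\<in>?S. x \<noteq> 0" using os by (auto simp: osys_def)
    show "\<forall>x\<in>?S. \<forall>y\<in>?S. x \<noteq> y \<longrightarrow> cinner x y = 0" using os by (auto simp: osys_def)
  qed
  have sub: "?S \<subseteq> {x. matpow B j *v x = 0}"
  proof
    fix x assume "x \<in> ?S"
    then obtain v a where xa: "x = matpow Bs a *v v" "v \<in> F" "a < j"
      by (auto simp: bvec_def Iset_def)
    have vK: "v \<in> Kset" using FK xa(2) by blast
    show "x \<in> {x. matpow B j *v x = 0}"
      using B_kill_gen[OF lev(3)[OF vK] lev(2)[OF vK] xa(3)] xa(1) by simp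
  qed
  have eq: "{x. matpow B j *v x = 0} = vec.span ?S"
  proof
    show "vec.span ?S \<subseteq> {x. matpow B j *v x = 0}"
      using sub by (rule vec.span_minimal) (rule vec.subspace_kernel)
    show "{x. matpow B j *v x = 0} \<subseteq> vec.span ?S"
    proof
      fix x assume x: "x \<in> {x. matpow B j *v x = 0}"
      have zero: "cinner x (bvec i) = 0" if "i \<in> ?I" "\<not> snd i < j" for i
      proof -
        obtain v a where i: "i = (v, a)" by (cases i)
        have ja: "j \<le> a" using that i by simp
        have e: "matpow Bs a *v v = matpow Bs j *v (matpow Bs (a - j) *v v)"
          using matpow_add_vec[of Bs j "a - j" v] ja by simp
        have "cinner x (bvec i) = cinner x (matpow Bs j *v (matpow Bs (a - j) *v v))"
          unfolding i bvec_def prod.case e ..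
        also have "\<dots> = cinner (matpow B j *v x) (matpow Bs (a - j) *v v)"
          by (rule cinner_adj_pow[symmetric])
        also have "\<dots> = 0" using x by simp
        finally show ?thesis .
      qed
      have "x = (\<Sum>i\<in>?I. (cinner x (bvec i) / cinner (bvec i) (bvec i)) *s bvec i)"
        by (rule osys_expand[OF os])
      also have "\<dots> = (\<Sum>i\<in>?Ij. (cinner x (bvec i) / cinner (bvec i) (bvec i)) *s bvec i)"
        using fin zero by (intro sum.mono_neutral_right) auto
      also have "\<dots> \<in> vec.span ?S"
        by (intro vec.span_sum vec.span_scale vec.span_base) auto
      finally show "x \<in> vec.span ?S" .
    qed
  qed
  have "vec.dim {x. matpow B j *v x = 0} = vec.dim (vec.span ?S)"
    unfolding eq ..
  also have "\<dots> = card ?S" by (rule vec.dim_span_eq_card_independent[OF indep])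
  also have "\<dots> = card ?Ij"
    by (rule card_image, rule inj_on_subset[OF inj]) auto
  finally show ?thesis .
qed

end



lemma Nsuc:
  fixes lev :: "'a \<Rightarrow> nat"
  assumes fin: "finite F"
  shows "card {i \<in> Sigma F (\<lambda>v. {..lev v}). snd i < Suc j}
       = card {i \<in> Sigma F (\<lambda>v. {..lev v}). snd i < j} + card {v\<in>F. j \<le> lev v}"
proof -
  have eq: "{i \<in> Sigma F (\<lambda>v. {..lev v}). snd i < Suc j}
      = {i \<in> Sigma F (\<lambda>v. {..lev v}). snd i < j} \<union> (\<lambda>v. (v, j)) ` {v\<in>F. j \<le> lev v}"
    by (auto simp: less_Suc_eq)
  have "card ({i \<in> Sigma F (\<lambda>v. {..lev v}). snd i < j} \<union> (\<lambda>v. (v, j)) ` {v\<in>F. j \<le> lev v})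
     = card {i \<in> Sigma F (\<lambda>v. {..lev v}). snd i < j} + card ((\<lambda>v. (v, j)) ` {v\<in>F. j \<le> lev v})"
    using fin by (intro card_Un_disjoint) auto
  also have "card ((\<lambda>v. (v, j)) ` {v\<in>F. j \<le> lev v}) = card {v\<in>F. j \<le> lev v}"
    by (intro card_image) (auto simp: inj_on_def)
  finally show ?thesis using eq by simp
qed

lemma fiber_card:
  fixes lev :: "'a \<Rightarrow> nat" and lev' :: "'b \<Rightarrow> nat"
  assumes fin: "finite F" "finite F'"
    and N: "\<forall>j. card {i \<in> Sigma F (\<lambda>v. {..lev v}). snd i < j} = card {i \<in> Sigma F' (\<lambda>v. {..lev' v}). snd i < j}"
  shows "card {v\<in>F. lev v = m} = card {v\<in>F'. lev' v = m}"
proof -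
  have G: "card {v\<in>F. j \<le> lev v} = card {v\<in>F'. j \<le> lev' v}" for j
  proof -
    note a = Nsuc[OF fin(1), of lev j]
    note b = Nsuc[OF fin(2), of lev' j]
    have c: "card {i \<in> Sigma F (\<lambda>v. {..lev v}). snd i < Suc j} = card {i \<in> Sigma F' (\<lambda>v. {..lev' v}). snd i < Suc j}"
      using N by blast
    have d: "card {i \<in> Sigma F (\<lambda>v. {..lev v}). snd i < j} = card {i \<in> Sigma F' (\<lambda>v. {..lev' v}). snd i < j}"
      using N by blast
    show ?thesis using a b c d by linarith
  qed
  have split: "card {v\<in>X. m \<le> l v} = card {v\<in>X. l v = m} + card {v\<in>X. Suc m \<le> l v}"
    if "finite X" for X and l :: "'c \<Rightarrow> nat"
  proof -
    have "{v\<in>X. m \<le> l v} = {v\<in>X. l v = m} \<union> {v\<in>X. Suc m \<le> l v}" by auto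
    moreover have "card ({v\<in>X. l v = m} \<union> {v\<in>X. Suc m \<le> l v}) = card {v\<in>X. l v = m} + card {v\<in>X. Suc m \<le> l v}"
      using that by (intro card_Un_disjoint) auto
    ultimately show ?thesis by simp
  qed
  show ?thesis using split[OF fin(1), of lev] split[OF fin(2), of lev'] G[of m] G[of "Suc m"] by simp
qed

lemma level_bij:
  fixes lev :: "'a \<Rightarrow> nat" and lev' :: "'b \<Rightarrow> nat"
  assumes fin: "finite F" "finite F'"
    and c: "\<forall>m. card {v\<in>F. lev v = m} = card {v\<in>F'. lev' v = m}"
  shows "\<exists>\<sigma>. bij_betw \<sigma> F F' \<and> (\<forall>v\<in>F. lev' (\<sigma> v) = lev v)"
proof -
  have "\<forall>m. \<exists>g. bij_betw g {v\<in>F. lev v = m} {v\<in>F'. lev' v = m}"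
    using c fin by (auto intro!: finite_same_card_bij)
  then obtain f where f: "\<And>m. bij_betw (f m) {v\<in>F. lev v = m} {v\<in>F'. lev' v = m}" by metis
  define \<sigma> where "\<sigma> v = f (lev v) v" for v
  have into: "\<sigma> v \<in> F' \<and> lev' (\<sigma> v) = lev v" if "v \<in> F" for v
    using bij_betwE[OF f[of "lev v"]] that by (auto simp: \<sigma>_def)
  have inj: "inj_on \<sigma> F"
  proof (rule inj_onI)
    fix v w assume vw: "v \<in> F" "w \<in> F" "\<sigma> v = \<sigma> w"
    then have "lev v = lev w" using into by metis
    then have "f (lev v) v = f (lev v) w" using vw by (simp add: \<sigma>_def)
    then show "v = w" using bij_betw_imp_inj_on[OF f[of "lev v"]] vw \<open>lev v = lev w\<close>
      by (auto simp: inj_on_def)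
  qed
  have surj: "\<sigma> ` F = F'"
  proof
    show "\<sigma> ` F \<subseteq> F'" using into by auto
    show "F' \<subseteq> \<sigma> ` F"
    proof
      fix w assume w: "w \<in> F'"
      have "w \<in> f (lev' w) ` {v\<in>F. lev v = lev' w}"
        using bij_betw_imp_surj_on[OF f[of "lev' w"]] w by auto
      then obtain v where v: "v \<in> F" "lev v = lev' w" "w = f (lev' w) v" by auto
      then have "w = \<sigma> v" by (simp add: \<sigma>_def)
      then show "w \<in> \<sigma> ` F" using v(1) by blast
    qed
  qed
  show ?thesis using inj surj into by (auto simp: bij_betw_def)
qed

lemma inv_props: "invertible h \<Longrightarrow> h ** matrix_inv h = mat 1 \<and> matrix_inv h ** h = mat 1"
  unfolding invertible_def matrix_inv_def by (rule someI_ex)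

theorem proposition5p8:
  fixes B B' h :: "complex ^'n ^'n" and k :: nat
  assumes "k \<ge> 1"
    and "B ** commutator B (conj_transpose B) = - B"
    and "matpow B k \<noteq> 0"
    and "matpow B (Suc k) = 0"
    and "invertible h"
    and "B' = h ** B ** matrix_inv h"
    and "B' ** commutator B' (conj_transpose B') = - B'"
  shows "\<exists>U. unitary_mat U \<and> B' = U ** B ** matrix_inv U"
proof -
  define hi where "hi = matrix_inv h"
  have hhi: "h ** hi = mat 1" "hi ** h = mat 1" using inv_props[OF assms(5)] by (auto simp: hi_def)
  have hi_h: "hi *v (h *v x) = x" for x using hhi by (simp add: matrix_vector_mul_assoc)
  have h_hi: "h *v (hi *v x) = x" for x using hhi by (simp add: matrix_vector_mul_assoc)
  have B'v: "B' *v x = h *v (B *v (hi *v x))" for x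
    unfolding assms(6) hi_def by (simp add: matrix_vector_mul_assoc matrix_mul_assoc)
  have B'pow: "matpow B' t *v x = h *v (matpow B t *v (hi *v x))" for t x
  proof (induction t arbitrary: x)
    case 0 then show ?case by (simp add: h_hi)
  next
    case (Suc t)
    show ?case by (simp only: matpow_Suc_vec Suc B'v hi_h)
  qed
  interpret b1: ncond B k using assms(2,4) by unfold_locales
  have nil2: "matpow B' (Suc k) = 0"
    unfolding matrix_eq using B'pow assms(4) by simp
  interpret b2: ncond B' k using assms(7) nil2 by unfold_locales
  obtain F1 where F1: "b1.ons F1" "osys (b1.Iset F1) b1.bvec" using b1.struct_ex by blast
  obtain F2 where F2: "b2.ons F2" "osys (b2.Iset F2) b2.bvec" using b2.struct_ex by blast
  have fin1: "finite F1" using F1 by (simp add: b1.ons_def)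
  have fin2: "finite F2" using F2 by (simp add: b2.ons_def)
  have kerrel: "{x. matpow B' j *v x = 0} = (\<lambda>x. h *v x) ` {x. matpow B j *v x = 0}" for j
  proof
    show "{x. matpow B' j *v x = 0} \<subseteq> (\<lambda>x. h *v x) ` {x. matpow B j *v x = 0}"
    proof
      fix x assume x: "x \<in> {x. matpow B' j *v x = 0}"
      then have "h *v (matpow B j *v (hi *v x)) = 0" using B'pow by simp
      then have "hi *v (h *v (matpow B j *v (hi *v x))) = 0" by simp
      then have "matpow B j *v (hi *v x) = 0" by (simp only: hi_h)
      then show "x \<in> (\<lambda>x. h *v x) ` {x. matpow B j *v x = 0}"
        using h_hi[of x] by (metis (mono_tags, lifting) image_eqI mem_Collect_eq)
    qed
    show "(\<lambda>x. h *v x) ` {x. matpow B j *v x = 0} \<subseteq> {x. matpow B' j *v x = 0}"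
      using B'pow hi_h by auto
  qed
  have injh: "inj ((*v) h)" by (rule inj_matrix_vector_mult[OF assms(5)])
  have dimeq: "vec.dim {x. matpow B' j *v x = 0} = vec.dim {x. matpow B j *v x = 0}" for j
    unfolding kerrel
    by (rule vec.dim_image_eq[OF matrix_vector_mul_linear_gen]) (auto intro: inj_on_subset[OF injh])
  have N: "\<forall>j. card {i \<in> Sigma F1 (\<lambda>v. {..b1.lev v}). snd i < j} = card {i \<in> Sigma F2 (\<lambda>v. {..b2.lev v}). snd i < j}"
    using b1.ker_dim[OF F1] b2.ker_dim[OF F2] dimeq by (simp add: b1.Iset_def b2.Iset_def)
  obtain \<sigma> where \<sigma>: "bij_betw \<sigma> F1 F2" "\<forall>v\<in>F1. b2.lev (\<sigma> v) = b1.lev v"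
    using level_bij[OF fin1 fin2 allI[OF fiber_card[OF fin1 fin2 N]]] by blast
  define \<tau> where "\<tau> = (\<lambda>(v::complex^'n, a::nat). (\<sigma> v, a))"
  define I where "I = b1.Iset F1"
  define bb where "bb = (\<lambda>i. b2.bvec (\<tau> i))"
  have \<tau>I: "\<tau> ` I = b2.Iset F2"
  proof
    show "\<tau> ` I \<subseteq> b2.Iset F2"
      using \<sigma> by (auto simp: \<tau>_def I_def b1.Iset_def b2.Iset_def bij_betw_def)
    show "b2.Iset F2 \<subseteq> \<tau> ` I"
    proof
      fix i assume i: "i \<in> b2.Iset F2"
      obtain w a where wa: "i = (w, a)" by (cases i)
      have "w \<in> F2" "a \<le> b2.lev w" using i wa by (auto simp: b2.Iset_def)
      then obtain v where v: "v \<in> F1" "w = \<sigma> v" using \<sigma>(1) by (auto simp: bij_betw_def)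
      then have "(v, a) \<in> I" using \<sigma>(2) \<open>a \<le> b2.lev w\<close> by (auto simp: I_def b1.Iset_def)
      then show "i \<in> \<tau> ` I" using wa v by (auto simp: \<tau>_def intro!: image_eqI[of _ _ "(v, a)"])
    qed
  qed
  have \<tau>inj: "inj_on \<tau> I"
    using \<sigma>(1) by (auto simp: inj_on_def \<tau>_def I_def b1.Iset_def bij_betw_def)
  have osbb: "osys I bb"
    unfolding osys_def
  proof (intro conjI ballI impI allI)
    show "finite I" using F1 by (simp add: I_def osys_def)
    fix i assume i: "i \<in> I"
    then have "\<tau> i \<in> b2.Iset F2" using \<tau>I by auto
    then show "bb i \<noteq> 0" using F2 by (simp add: bb_def osys_def)
    fix j assume j: "j \<in> I" "i \<noteq> j"
    then have "\<tau> i \<noteq> \<tau> j" using \<tau>inj i by (auto simp: inj_on_def)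
    moreover have "\<tau> j \<in> b2.Iset F2" using \<tau>I j by auto
    ultimately show "cinner (bb i) (bb j) = 0"
      using F2 \<open>\<tau> i \<in> b2.Iset F2\<close> by (simp add: bb_def osys_def)
  next
    fix x assume x: "\<forall>i\<in>I. cinner x (bb i) = 0"
    then have "\<forall>i\<in>\<tau> ` I. cinner x (b2.bvec i) = 0" by (simp add: bb_def)
    then have "\<forall>i\<in>b2.Iset F2. cinner x (b2.bvec i) = 0" unfolding \<tau>I .
    then show "x = 0" using F2(2) unfolding osys_def by blast
  qed
  have os1: "osys I b1.bvec" using F1 by (simp add: I_def)
  have norms: "\<forall>i\<in>I. cinner (bb i) (bb i) = cinner (b1.bvec i) (b1.bvec i)"
  proof
    fix i assume i: "i \<in> I"
    obtain v a where va: "i = (v, a)" by (cases i)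
    have v: "v \<in> F1" using i va by (auto simp: I_def b1.Iset_def)
    have sv: "\<sigma> v \<in> F2" using v \<sigma>(1) by (auto simp: bij_betw_def)
    show "cinner (bb i) (bb i) = cinner (b1.bvec i) (b1.bvec i)"
      using b1.bvec_norm[OF F1(1) v, of a] b2.bvec_norm[OF F2(1) sv, of a] \<sigma>(2) v
      by (simp add: bb_def va \<tau>_def)
  qed
  define U where "U = (\<Sum>i\<in>I. outer (1 / cinner (b1.bvec i) (b1.bvec i)) (bb i) (b1.bvec i))"
  have Uu: "unitary_mat U" and Ub: "\<forall>i\<in>I. U *v b1.bvec i = bb i"
    using osys_unitary[OF os1 osbb norms] by (simp_all add: U_def)
  have inter: "U ** b1.Bs = b2.Bs ** U"
  proof (rule osys_mat_eq[OF os1], intro ballI)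
    fix i assume i: "i \<in> I"
    obtain v a where va: "i = (v, a)" by (cases i)
    have v: "v \<in> F1" "a \<le> b1.lev v" using i va by (auto simp: I_def b1.Iset_def)
    have vK: "v \<in> b1.Kset" using v F1 by (auto simp: b1.ons_def)
    have sv: "\<sigma> v \<in> F2" using v \<sigma>(1) by (auto simp: bij_betw_def)
    have svK: "\<sigma> v \<in> b2.Kset" using sv F2 by (auto simp: b2.ons_def)
    have lhs: "(U ** b1.Bs) *v b1.bvec i = U *v (matpow b1.Bs (Suc a) *v v)"
      by (simp add: va b1.bvec_def matpow_Suc_vec matrix_vector_mul_assoc[symmetric])
    have rhs: "(b2.Bs ** U) *v b1.bvec i = matpow b2.Bs (Suc a) *v \<sigma> v"
      using Ub i by (simp add: va bb_def \<tau>_def b2.bvec_def matpow_Suc_vec matrix_vector_mul_assoc[symmetric])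
    show "(U ** b1.Bs) *v b1.bvec i = (b2.Bs ** U) *v b1.bvec i"
    proof (cases "a < b1.lev v")
      case True
      then have "(v, Suc a) \<in> I" using v by (auto simp: I_def b1.Iset_def)
      then have "U *v b1.bvec (v, Suc a) = bb (v, Suc a)" using Ub by blast
      then show ?thesis unfolding lhs rhs by (simp add: b1.bvec_def bb_def \<tau>_def b2.bvec_def)
    next
      case False
      then have a: "a = b1.lev v" using v by simp
      have "matpow b1.Bs (Suc a) *v v = 0"
        unfolding a by (rule b1.Bs_top[OF b1.lev(3)[OF vK] b1.lev(2)[OF vK]])
      moreover have "matpow b2.Bs (Suc a) *v \<sigma> v = 0"
        unfolding a \<sigma>(2)[rule_format, OF v(1), symmetric]
        by (rule b2.Bs_top[OF b2.lev(3)[OF svK] b2.lev(2)[OF svK]])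
      ultimately show ?thesis unfolding lhs rhs by simp
    qed
  qed
  have UU: "U ** conj_transpose U = mat 1" "conj_transpose U ** U = mat 1"
    using Uu by (auto simp: unitary_mat_def)
  have invU: "matrix_inv U = conj_transpose U"
  proof -
    have "invertible U" using UU unfolding invertible_def by blast
    then have X: "U ** matrix_inv U = mat 1" "matrix_inv U ** U = mat 1" using inv_props by auto
    have "matrix_inv U = matrix_inv U ** (U ** conj_transpose U)" using UU by simp
    also have "\<dots> = conj_transpose U" using X by (simp add: matrix_mul_assoc)
    finally show ?thesis .
  qed
  have inter2: "B ** conj_transpose U = conj_transpose U ** B'"
    using arg_cong[OF inter, of conj_transpose] by (simp add: ct_mult)
  have "U ** B ** matrix_inv U = U ** (B ** conj_transpose U)"
    by (simp add: invU matrix_mul_assoc)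
  also have "\<dots> = (U ** conj_transpose U) ** B'" by (simp add: inter2 matrix_mul_assoc)
  also have "\<dots> = B'" using UU by simp
  finally show ?thesis using Uu by metis
qed


end
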